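(* Suppose the noise condition $\mathbb P_X(0<\Delta(X)\le\delta)\le(\gamma\delta/B)^\alpha$ for all $\delta>0$ holds for some $\alpha,\gamma\ge0$, and suppose that, for universal constants $C_1,C_2$ and a sequence $a_n>0$, the (data-dependent) estimator $\hat f$ satisfies, for every $\delta>0$ and almost every $x$, $$\mathbb P(\|\hat{f}(x) - f^*(x)\|\ge \delta)\le C_1 \exp(- C_2 a_n \delta^2).$$ Then, for a constant $C(\alpha,\gamma)$ depending only on $\alpha,\gamma$, $$\mathrm{Regret}(\pi_{\hat{f}}) \le C(\alpha, \gamma)\, B\, a_n^{-\frac{1+\alpha}{2}}.$$
   Context: Setting: $X\in\mathbb R^p$, $Y\in\mathbb R^d$ with $\|Y\|\le1$, $f^*(x)=\mathbb E[Y\mid X=x]$. $\mathcal Z=\{z:Az\le b\}$ is a polytope with $\sup_{z\in\mathcal Z}\|z\|\le B$ and finite set of extreme points $\mathcal Z^\angle$; $\mathcal Z^*(x)=\arg\min_{z\in\mathcal Z}f^*(x)^\top z$, $\pi^*(x)\in\mathcal Z^*(x)$; $\Delta(x)=\inf_{z\in\mathcal Z^\angle\setminus\mathcal Z^*(x)}f^*(x)^\top z-\inf_{z\in\mathcal Z}f^*(x)^\top z$ if $\mathcal Z^*(x)\ne\mathcal Z$, else $0$. Data $\mathcal D$ are $n$ i.i.d. draws of $(X,Y)$; $\mathrm{Regret}(\hat\pi)=\mathbb E_{\mathcal D}\mathbb E_X[f^*(X)^\top(\hat\pi(X)-\pi^*(X))]$, $X$ an independent new draw. For $f$, the plug-in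 policy $\pi_f(x)\in\arg\min_{z\in\mathcal Z}f(x)^\top z$ is chosen in $\mathcal Z^\angle$ with ties broken by a fixed ordering of $\mathcal Z^\angle$. *)

theory Defs
  imports "HOL-Probability.Probability"
begin

text \<open>Vectors of R^k are represented as functions nat => real vanishing from index k on,
  so that the dimensions p, d are ordinary values (and the constant of the theorem can be
  chosen independently of them).\<close>

definition vspace :: "nat \<Rightarrow> (nat \<Rightarrow> real) set" where
  "vspace k = {v. \<forall>i\<ge>k. v i = 0}"

definition ip :: "nat \<Rightarrow> (nat \<Rightarrow> real) \<Rightarrow> (nat \<Rightarrow> real) \<Rightarrow> real" where
  "ip d u v = (\<Sum>i<d. u i * v i)"

definition nrm :: "nat \<Rightarrow> (nat \<Rightarrow> real) \<Rightarrow> real" where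
  "nrm d v = sqrt (\<Sum>i<d. (v i)^2)"

definition polytope :: "nat \<Rightarrow> nat \<Rightarrow> (nat \<Rightarrow> nat \<Rightarrow> real) \<Rightarrow> (nat \<Rightarrow> real) \<Rightarrow> (nat \<Rightarrow> real) set" where
  "polytope d m A b = {z \<in> vspace d. \<forall>j<m. (\<Sum>i<d. A j i * z i) \<le> b j}"

definition extreme_pts :: "(nat \<Rightarrow> real) set \<Rightarrow> (nat \<Rightarrow> real) set" where
  "extreme_pts Z = {z \<in> Z. \<forall>u\<in>Z. \<forall>v\<in>Z. \<forall>t::real.
      0 < t \<and> t < 1 \<and> z = (\<lambda>i. t * u i + (1 - t) * v i) \<longrightarrow> u = v}"

definition optval :: "nat \<Rightarrow> (nat \<Rightarrow> real) set \<Rightarrow> (nat \<Rightarrow> real) \<Rightarrow> real" where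
  "optval d Z c = Inf ((\<lambda>z. ip d c z) ` Z)"

definition opt_set :: "nat \<Rightarrow> (nat \<Rightarrow> real) set \<Rightarrow> (nat \<Rightarrow> real) \<Rightarrow> (nat \<Rightarrow> real) set" where
  "opt_set d Z c = {z \<in> Z. \<forall>z'\<in>Z. ip d c z \<le> ip d c z'}"

text \<open>The gap Delta (evaluated at c = f*(x)).\<close>
definition gap :: "nat \<Rightarrow> (nat \<Rightarrow> real) set \<Rightarrow> (nat \<Rightarrow> real) \<Rightarrow> real" where
  "gap d Z c = (if opt_set d Z c \<noteq> Z
      then Inf ((\<lambda>z. ip d c z) ` (extreme_pts Z - opt_set d Z c)) - optval d Z c
      else 0)"

definition plugin :: "nat \<Rightarrow> (nat \<Rightarrow> real) set \<Rightarrow> (nat \<Rightarrow> real) list \<Rightarrow> (nat \<Rightarrow> real) \<Rightarrow> (nat \<Rightarrow> real)" where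
  "plugin d Z zs c = hd (filter (\<lambda>z. z \<in> opt_set d Z c) zs)"

text \<open>g is (a version of) E[Y | X = x], where M is the joint law of (X,Y).\<close>
definition is_cond_exp_Y :: "nat \<Rightarrow> ((nat \<Rightarrow> real) \<times> (nat \<Rightarrow> real)) measure
    \<Rightarrow> ((nat \<Rightarrow> real) \<Rightarrow> (nat \<Rightarrow> real)) \<Rightarrow> bool" where
  "is_cond_exp_Y d M g \<longleftrightarrow>
     g \<in> borel \<rightarrow>\<^sub>M borel \<and> (\<forall>x. g x \<in> vspace d) \<and>
     (\<forall>i<d. integrable (distr M borel fst) (\<lambda>x. g x i)) \<and>
     (\<forall>i<d. \<forall>A\<in>sets borel.
        (\<integral>xy. indicator A (fst xy) * snd xy i \<partial>M) = (\<integral>x. indicator A x * g x i \<partial>(distr M borel fst)))"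

text \<open>Right-hand side (gamma delta / B)^alpha of the noise condition, with 0^0 = 1.\<close>
definition noise_rhs :: "real \<Rightarrow> real \<Rightarrow> real \<Rightarrow> real \<Rightarrow> real" where
  "noise_rhs \<alpha> \<gamma> B \<delta> = (if \<alpha> = 0 then 1 else (\<gamma> * \<delta> / B) powr \<alpha>)"

end

theory Submission
  imports Defs
begin
lemma lin_sum: "(\<Sum>i<d. (a::nat\<Rightarrow>real) i * (x i + s * y i)) = (\<Sum>i<d. a i * x i) + s * (\<Sum>i<d. a i * y i)"
  by (simp add: algebra_simps sum.distrib sum_distrib_left)

lemma comp_le_nrm: "i < d \<Longrightarrow> \<bar>v i\<bar> \<le> nrm d v"
proof -
  assume "i < d"
  have "(v i)^2 \<le> (\<Sum>j<d. (v j)^2)"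
    using \<open>i<d\<close> by (intro member_le_sum) auto
  then have "sqrt ((v i)^2) \<le> nrm d v" unfolding nrm_def by (rule real_sqrt_le_mono)
  then show ?thesis by simp
qed

lemma ext_exists:
  fixes c :: "nat \<Rightarrow> real"
  assumes bnd: "\<forall>z\<in>polytope d m A b. nrm d z \<le> B" and z0: "z0 \<in> polytope d m A b"
  shows "\<exists>e\<in>extreme_pts (polytope d m A b). ip d c e \<le> ip d c z0"
proof -
  define Z where "Z = polytope d m A b"
  define Aw where "Aw j w = (\<Sum>i<d. A j i * w i)" for j w
  have Zc: "z \<in> Z \<longleftrightarrow> z \<in> vspace d \<and> (\<forall>j<m. Aw j z \<le> b j)" for z
    unfolding Z_def polytope_def Aw_def by auto
  have Aw_lin: "Aw j (\<lambda>i. x i + s * y i) = Aw j x + s * Aw j y" for j x s y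
    unfolding Aw_def by (rule lin_sum)
  have ip_lin: "ip d c (\<lambda>i. x i + s * y i) = ip d c x + s * ip d c y" for x s y
    unfolding ip_def by (rule lin_sum)
  have main: "\<forall>z. z \<in> Z \<longrightarrow> card {j. j<m \<and> Aw j z < b j} \<le> k \<longrightarrow> (\<exists>e\<in>extreme_pts Z. ip d c e \<le> ip d c z)" for k
  proof (induction k rule: less_induct)
    case (less k)
    show ?case
    proof (intro allI impI)
      fix z assume zZ: "z \<in> Z" and ck: "card {j. j<m \<and> Aw j z < b j} \<le> k"
      show "\<exists>e\<in>extreme_pts Z. ip d c e \<le> ip d c z"
      proof (cases "z \<in> extreme_pts Z")
        case True then show ?thesis by auto
      next
        case False
        then obtain u v t where uZ: "u\<in>Z" and vZ: "v\<in>Z" and t: "0<t" "t<1"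
          and zuv: "z = (\<lambda>i. t*u i + (1-t) * v i)" and uv: "u\<noteq>v"
          using zZ unfolding extreme_pts_def by blast
        define w where "w = (\<lambda>i. u i - v i)"
        have uvs: "u \<in> vspace d" "v \<in> vspace d" using uZ vZ Zc by auto
        have wvs: "w \<in> vspace d" using uvs unfolding vspace_def w_def by auto
        obtain i0 where i0: "i0 < d" "w i0 \<noteq> 0"
        proof -
          have "\<exists>i<d. u i \<noteq> v i"
          proof (rule ccontr)
            assume "\<not> ?thesis"
            then have "u i = v i" for i using uvs unfolding vspace_def by (cases "i < d") auto
            then show False using uv by auto
          qed
          then show ?thesis using that unfolding w_def by auto
        qed
        have act: "Aw j w = 0" if "j<m" "Aw j z = b j" for j
        proof -
          have zc: "Aw j z = t * Aw j u + (1-t) * Aw j v"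
            unfolding zuv Aw_def by (simp add: distrib_left sum.distrib sum_distrib_left mult.left_commute)
          have "Aw j u \<le> b j" "Aw j v \<le> b j" using uZ vZ Zc that by auto
          note le = this
          have "Aw j u = b j"
          proof (rule ccontr)
            assume "Aw j u \<noteq> b j"
            then have "t * Aw j u < t * b j" using le t by (intro mult_strict_left_mono) auto
            moreover have "(1-t) * Aw j v \<le> (1-t) * b j" using le t by (intro mult_left_mono) auto
            ultimately show False using zc that by (simp add: algebra_simps)
          qed
          moreover have "Aw j v = b j"
          proof (rule ccontr)
            assume "Aw j v \<noteq> b j"
            then have "(1-t) * Aw j v < (1-t) * b j" using le t by (intro mult_strict_left_mono) auto
            moreover have "t * Aw j u \<le> t * b j" using le t by (intro mult_left_mono) auto
            ultimately show False using zc that by (simp add: algebra_simps)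
          qed
          ultimately
          show ?thesis unfolding Aw_def w_def by (simp add: algebra_simps sum_subtractf)
        qed
        define w' where "w' = (if ip d c w \<le> 0 then w else (\<lambda>i. - w i))"
        have w'neg: "ip d c w' \<le> 0"
          unfolding w'_def ip_def by (auto simp: sum_negf)
        have w'vs: "w' \<in> vspace d" using wvs unfolding w'_def vspace_def by auto
        have w'i0: "w' i0 \<noteq> 0" using i0 unfolding w'_def by auto
        have act': "Aw j w' = 0" if "j<m" "Aw j z = b j" for j
          using act[OF that] unfolding w'_def Aw_def by (auto simp: sum_negf)
        define J where "J = {j. j<m \<and> Aw j w' > 0}"
        have finJ: "finite J" unfolding J_def by auto
        have Jne: "J \<noteq> {}"
        proof
          assume J0: "J = {}"
          define s where "s = (B + \<bar>z i0\<bar> + 1) / \<bar>w' i0\<bar>"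
          have "\<bar>z i0\<bar> \<le> B" using bnd zZ comp_le_nrm[OF i0(1), of z] unfolding Z_def by fastforce
          then have s0: "s \<ge> 0" unfolding s_def by simp
          have "(\<lambda>i. z i + s * w' i) \<in> Z"
          proof -
            have "(\<lambda>i. z i + s * w' i) \<in> vspace d" using zZ Zc w'vs unfolding vspace_def by auto
            moreover have "Aw j (\<lambda>i. z i + s * w' i) \<le> b j" if "j<m" for j
            proof -
              have "Aw j w' \<le> 0" using J0 that unfolding J_def by auto
              then have "s * Aw j w' \<le> 0" using s0 by (simp add: mult_nonneg_nonpos)
              moreover have "Aw j z \<le> b j" using zZ Zc that by blast
              ultimately show ?thesis using Aw_lin[of j z s w'] by simp
            qed
            ultimately show ?thesis using Zc by auto
          qed
          then have "nrm d (\<lambda>i. z i + s * w' i) \<le> B" using bnd unfolding Z_def by blast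
          then have "\<bar>z i0 + s * w' i0\<bar> \<le> B"
            using comp_le_nrm[OF i0(1), of "\<lambda>i. z i + s * w' i"] by simp
          moreover have "\<bar>s * w' i0\<bar> = B + \<bar>z i0\<bar> + 1"
            using w'i0 s0 unfolding s_def by (simp add: abs_mult)
          ultimately show False by linarith
        qed
        define s where "s = Min ((\<lambda>j. (b j - Aw j z) / Aw j w') ` J)"
        obtain j0 where j0: "j0 \<in> J" "s = (b j0 - Aw j0 z) / Aw j0 w'"
        proof -
          have "s \<in> (\<lambda>j. (b j - Aw j z) / Aw j w') ` J"
            unfolding s_def using finJ Jne by (intro Min_in) auto
          then show ?thesis using that by auto
        qed
        have sle: "s \<le> (b j - Aw j z) / Aw j w'" if "j \<in> J" for j
          unfolding s_def using finJ that by auto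
        have s0: "s \<ge> 0"
        proof -
          have "j0 < m" "Aw j0 w' > 0" using j0(1) unfolding J_def by auto
          moreover have "Aw j0 z \<le> b j0" using zZ Zc \<open>j0 < m\<close> by blast
          ultimately show ?thesis unfolding j0(2) by simp
        qed
        define z' where "z' = (\<lambda>i. z i + s * w' i)"
        have Awz': "Aw j z' = Aw j z + s * Aw j w'" for j unfolding z'_def by (rule Aw_lin)
        have z'Z: "z' \<in> Z"
        proof -
          have "z' \<in> vspace d" using zZ Zc w'vs unfolding vspace_def z'_def by auto
          moreover have "Aw j z' \<le> b j" if "j<m" for j
          proof (cases "j \<in> J")
            case True
            then have p: "Aw j w' > 0" unfolding J_def by auto
            have "s * Aw j w' \<le> b j - Aw j z" using sle[OF True] p by (simp add: pos_le_divide_eq)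
            then show ?thesis using Awz' by simp
          next
            case False
            then have "Aw j w' \<le> 0" using that unfolding J_def by auto
            then have "s * Aw j w' \<le> 0" using s0 by (simp add: mult_nonneg_nonpos)
            moreover have "Aw j z \<le> b j" using zZ Zc that by blast
            ultimately show ?thesis using Awz'[of j] by simp
          qed
          ultimately show ?thesis using Zc by auto
        qed
        have sub: "{j. j<m \<and> Aw j z' < b j} \<subset> {j. j<m \<and> Aw j z < b j}"
        proof
          show "{j. j<m \<and> Aw j z' < b j} \<subseteq> {j. j<m \<and> Aw j z < b j}"
          proof safe
            fix j assume j: "j<m" "Aw j z' < b j"
            show "Aw j z < b j"
            proof (rule ccontr)
              assume "\<not> Aw j z < b j"
              moreover have "Aw j z \<le> b j" using zZ Zc j(1) by blast
              ultimately have "Aw j z = b j" by linarith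
              then show False using act'[OF j(1)] Awz' j by simp
            qed
          qed
          have j0m: "j0 < m" "Aw j0 w' > 0" using j0 unfolding J_def by auto
          have "Aw j0 z' = b j0" using Awz' j0 j0m by simp
          moreover have "Aw j0 z < b j0"
          proof -
            have "Aw j0 z \<le> b j0" using zZ Zc j0m(1) by blast
            moreover have "Aw j0 z \<noteq> b j0" using act'[OF j0m(1)] j0m(2) by auto
            ultimately show ?thesis by linarith
          qed
          ultimately have "j0 \<in> {j. j<m \<and> Aw j z < b j}" "j0 \<notin> {j. j<m \<and> Aw j z' < b j}"
            using j0m by auto
          then show "{j. j<m \<and> Aw j z' < b j} \<noteq> {j. j<m \<and> Aw j z < b j}"
            by metis
        qed
        then have "card {j. j<m \<and> Aw j z' < b j} < card {j. j<m \<and> Aw j z < b j}"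
          by (intro psubset_card_mono) auto
        then have "card {j. j<m \<and> Aw j z' < b j} < k" using ck by simp
        then obtain e where e: "e\<in>extreme_pts Z" "ip d c e \<le> ip d c z'"
          using less.IH z'Z by blast
        have "ip d c z' \<le> ip d c z"
          unfolding z'_def ip_lin using s0 w'neg by (simp add: mult_nonneg_nonpos)
        then have "ip d c e \<le> ip d c z" using e(2) by (rule order_trans[rotated])
        then show ?thesis using e(1) by blast
      qed
    qed
  qed
  show ?thesis using main[of "card {j. j<m \<and> Aw j z0 < b j}"] z0 unfolding Z_def by auto
qed

definition Tset :: "nat \<Rightarrow> (nat \<Rightarrow> real) set \<Rightarrow> real \<Rightarrow> (nat \<Rightarrow> real) \<Rightarrow> bool" where
  "Tset d E \<delta> c = (\<exists>e\<in>E. (\<exists>e'\<in>E. ip d c e' < ip d c e) \<and> (\<forall>e'\<in>E. ip d c e \<le> ip d c e' + \<delta>))"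

lemma ip_neg: "ip d (\<lambda>i. - c i) z = - ip d c z"
  unfolding ip_def by (simp add: sum_negf)

lemma ip_diff: "ip d c (u - v) = ip d c u - ip d c v"
  unfolding ip_def by (simp add: algebra_simps sum_subtractf)

locale polysetup =
  fixes d m :: nat and A :: "nat \<Rightarrow> nat \<Rightarrow> real" and b :: "nat \<Rightarrow> real" and B :: real
    and zs :: "(nat \<Rightarrow> real) list"
  assumes bnd: "\<forall>z\<in>polytope d m A b. nrm d z \<le> B"
    and ne: "polytope d m A b \<noteq> {}"
    and zs: "set zs = extreme_pts (polytope d m A b)"
begin

abbreviation "Z \<equiv> polytope d m A b"
abbreviation "E \<equiv> set zs"

lemma E_sub: "E \<subseteq> Z" using zs unfolding extreme_pts_def by auto

lemma ext: "z \<in> Z \<Longrightarrow> \<exists>e\<in>E. ip d c e \<le> ip d c z"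
  using ext_exists[OF bnd] zs by auto

lemma ext_max: "z \<in> Z \<Longrightarrow> \<exists>e\<in>E. ip d c z \<le> ip d c e"
  using ext[of z "\<lambda>i. - c i"] by (auto simp: ip_neg)

lemma opt_ex: "\<exists>e0\<in>E. e0 \<in> opt_set d Z c"
proof -
  obtain z where z: "z \<in> Z" using ne by auto
  then obtain e1 where "e1 \<in> E" using ext by blast
  then have En: "E \<noteq> {}" by auto
  have "Min ((\<lambda>e. ip d c e) ` E) \<in> (\<lambda>e. ip d c e) ` E" using En by (intro Min_in) auto
  then obtain e0 where e0: "e0 \<in> E" "ip d c e0 = Min ((\<lambda>e. ip d c e) ` E)" by auto
  have "ip d c e0 \<le> ip d c z'" if z': "z' \<in> Z" for z'
  proof -
    obtain e where e: "e \<in> E" "ip d c e \<le> ip d c z'" using ext[OF z'] by blast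
    have "ip d c e0 \<le> ip d c e" unfolding e0(2) using e(1) by (intro Min_le) auto
    then show ?thesis using e(2) by linarith
  qed
  then show ?thesis using e0(1) E_sub unfolding opt_set_def by blast
qed

lemma plugin_in: "plugin d Z zs c \<in> E \<and> plugin d Z zs c \<in> opt_set d Z c"
proof -
  obtain e0 where e0: "e0 \<in> E" "e0 \<in> opt_set d Z c" using opt_ex by blast
  then have "filter (\<lambda>z. z \<in> opt_set d Z c) zs \<noteq> []" by (auto simp: filter_empty_conv)
  then have "hd (filter (\<lambda>z. z \<in> opt_set d Z c) zs) \<in> set (filter (\<lambda>z. z \<in> opt_set d Z c) zs)"
    by (rule hd_in_set)
  then show ?thesis unfolding plugin_def by auto
qed

lemma gap_T: "(0 < gap d Z c \<and> gap d Z c \<le> \<delta>) \<longleftrightarrow> Tset d E \<delta> c"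
proof -
  obtain e0 where e0: "e0 \<in> E" "e0 \<in> opt_set d Z c" using opt_ex by blast
  define m0 where "m0 = ip d c e0"
  have e0Z: "e0 \<in> Z" using e0 E_sub by auto
  have m0le: "m0 \<le> ip d c z" if "z \<in> Z" for z using e0(2) that unfolding opt_set_def m0_def by auto
  have optval: "optval d Z c = m0"
    unfolding optval_def by (rule cInf_eq_minimum) (use e0Z m0le m0_def in auto)
  have optc: "z \<in> opt_set d Z c \<longleftrightarrow> z \<in> Z \<and> ip d c z \<le> m0" for z
    using m0le e0Z unfolding opt_set_def m0_def by force
  show ?thesis
  proof (cases "opt_set d Z c = Z")
    case True
    then have g: "gap d Z c = 0" unfolding gap_def by simp
    have "\<not> Tset d E \<delta> c"
    proof
      assume "Tset d E \<delta> c"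
      then obtain e e' where "e \<in> E" "e' \<in> E" "ip d c e' < ip d c e" unfolding Tset_def by blast
      moreover then have "e \<in> opt_set d Z c" using True E_sub by auto
      ultimately show False using E_sub optc m0le by force
    qed
    then show ?thesis using g by simp
  next
    case False
    define N where "N = E - opt_set d Z c"
    have g: "gap d Z c = Inf ((\<lambda>z. ip d c z) ` N) - m0"
      unfolding gap_def N_def using False zs optval by simp
    have Nc: "e \<in> N \<longleftrightarrow> e \<in> E \<and> m0 < ip d c e" for e
      unfolding N_def using optc E_sub by force
    obtain z where z: "z \<in> Z" "z \<notin> opt_set d Z c" using False unfolding opt_set_def by auto
    then have zm: "m0 < ip d c z" using optc by auto
    obtain e where "e \<in> E" "ip d c z \<le> ip d c e" using ext_max[OF z(1)] by blast
    then have "e \<in> N" using zm Nc by auto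
    then have Nne: "N \<noteq> {}" by auto
    have finN: "finite N" unfolding N_def by auto
    have "Min ((\<lambda>z. ip d c z) ` N) \<in> (\<lambda>z. ip d c z) ` N" using Nne finN by (intro Min_in) auto
    then obtain eN where eN: "eN \<in> N" "ip d c eN = Min ((\<lambda>z. ip d c z) ` N)" by auto
    have Inf: "Inf ((\<lambda>z. ip d c z) ` N) = ip d c eN"
      using eN Nne finN by (simp add: cInf_eq_Min)
    have eNmin: "ip d c eN \<le> ip d c e" if "e \<in> N" for e
      unfolding eN(2) using finN that by (intro Min_le) auto
    have gv: "gap d Z c = ip d c eN - m0" using g Inf by simp
    show ?thesis
    proof
      assume L: "0 < gap d Z c \<and> gap d Z c \<le> \<delta>"
      have "eN \<in> E" "m0 < ip d c eN" using eN(1) Nc by auto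
      moreover have "ip d c eN \<le> ip d c e' + \<delta>" if "e' \<in> E" for e'
        using m0le[of e'] that E_sub L gv by auto
      ultimately show "Tset d E \<delta> c" unfolding Tset_def using e0(1) m0_def by blast
    next
      assume "Tset d E \<delta> c"
      then obtain e where e: "e \<in> E" "\<exists>e'\<in>E. ip d c e' < ip d c e" "\<forall>e'\<in>E. ip d c e \<le> ip d c e' + \<delta>"
        unfolding Tset_def by blast
      have "m0 < ip d c e" using e(2) m0le E_sub by force
      then have "e \<in> N" using Nc e(1) by auto
      then have "ip d c eN \<le> ip d c e" by (rule eNmin)
      moreover have "ip d c e \<le> m0 + \<delta>" using e(3) e0(1) m0_def by auto
      moreover have "m0 < ip d c eN" using eN(1) Nc by auto
      ultimately show "0 < gap d Z c \<and> gap d Z c \<le> \<delta>" using gv by auto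
    qed
  qed
qed

lemma T_mono: "Tset d E \<delta> c \<Longrightarrow> \<delta> \<le> \<delta>' \<Longrightarrow> Tset d E \<delta>' c"
  unfolding Tset_def by force

lemma regret_pt:
  fixes ch cs \<pi> :: "nat \<Rightarrow> real"
  assumes pi: "\<pi> \<in> opt_set d Z cs"
  defines "h \<equiv> ip d cs (plugin d Z zs ch - \<pi>)"
  shows "0 \<le> h" "h \<le> 2 * B * nrm d (ch - cs)" "0 < h \<Longrightarrow> Tset d E h cs"
proof -
  define zh where "zh = plugin d Z zs ch"
  have zh: "zh \<in> E" "zh \<in> opt_set d Z ch" using plugin_in unfolding zh_def by auto
  have zhZ: "zh \<in> Z" using zh E_sub by auto
  have piZ: "\<pi> \<in> Z" using pi unfolding opt_set_def by auto
  have hv: "h = ip d cs zh - ip d cs \<pi>" unfolding h_def zh_def by (rule ip_diff)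
  show "0 \<le> h" using pi zhZ unfolding hv opt_set_def by auto
  have "ip d ch zh \<le> ip d ch \<pi>" using zh(2) piZ unfolding opt_set_def by auto
  then have "h \<le> (ip d cs zh - ip d cs \<pi>) - (ip d ch zh - ip d ch \<pi>)" using hv by simp
  also have "\<dots> = (\<Sum>i<d. (cs i - ch i) * (zh i - \<pi> i))"
    unfolding ip_def by (simp add: algebra_simps sum_subtractf sum.distrib)
  also have "\<dots> \<le> (\<Sum>i<d. \<bar>cs i - ch i\<bar> * \<bar>zh i - \<pi> i\<bar>)"
    by (intro sum_mono) (metis abs_ge_self abs_mult)
  also have "\<dots> \<le> L2_set (\<lambda>i. cs i - ch i) {..<d} * L2_set (\<lambda>i. zh i - \<pi> i) {..<d}"
    by (rule L2_set_mult_ineq)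
  also have "\<dots> \<le> nrm d (ch - cs) * (2 * B)"
  proof (rule mult_mono)
    show "L2_set (\<lambda>i. cs i - ch i) {..<d} \<le> nrm d (ch - cs)"
      unfolding L2_set_def nrm_def by (simp add: power2_commute)
    have "L2_set (\<lambda>i. zh i + (- \<pi> i)) {..<d} \<le> L2_set zh {..<d} + L2_set (\<lambda>i. - \<pi> i) {..<d}"
      by (rule L2_set_triangle_ineq)
    also have "\<dots> = nrm d zh + nrm d \<pi>" unfolding L2_set_def nrm_def by simp
    also have "\<dots> \<le> 2 * B"
    proof -
      have "nrm d zh \<le> B" "nrm d \<pi> \<le> B" using bnd zhZ piZ by auto
      then show ?thesis by linarith
    qed
    finally show "L2_set (\<lambda>i. zh i - \<pi> i) {..<d} \<le> 2 * B" by simp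
    show "0 \<le> nrm d (ch - cs)" unfolding nrm_def by (simp add: sum_nonneg)
  qed (simp_all add: L2_set_def sum_nonneg)
  finally show "h \<le> 2 * B * nrm d (ch - cs)" by (simp add: mult.commute)
  assume h0: "0 < h"
  obtain e0 where e0: "e0 \<in> E" "e0 \<in> opt_set d Z cs" using opt_ex by blast
  have eq: "ip d cs e0 = ip d cs \<pi>" using e0 pi E_sub unfolding opt_set_def by force
  have "ip d cs e0 < ip d cs zh" using h0 hv eq by simp
  moreover have "ip d cs zh \<le> ip d cs e' + h" if "e' \<in> E" for e'
    using pi that E_sub hv unfolding opt_set_def by force
  ultimately show "Tset d E h cs" unfolding Tset_def using zh(1) e0(1) by blast
qed



end


lemma summ_s:
  fixes \<beta> :: real assumes b0: "\<beta> \<ge> 0"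
  shows "summable (\<lambda>k::nat. (real k + 1) powr \<beta> * exp (- ((real k)^2)))"
proof (rule summable_ratio_test[where c="1/2" and N="nat \<lceil>2 powr \<beta>\<rceil>"])
  fix n :: nat assume n: "n \<ge> nat \<lceil>2 powr \<beta>\<rceil>"
  have "real (Suc n) + 1 \<le> 2 * (real n + 1)" by simp
  then have p: "(real (Suc n) + 1) powr \<beta> \<le> (2 * (real n + 1)) powr \<beta>"
    using b0 by (intro powr_mono2) auto
  have p2: "(2 * (real n + 1)) powr \<beta> = 2 powr \<beta> * (real n + 1) powr \<beta>"
    using powr_mult[of 2 "real n + 1" \<beta>] by simp
  have e: "exp (- ((real (Suc n))^2)) = exp (- ((real n)^2)) * exp (-(2 * real n + 1))"
    by (simp add: exp_add[symmetric] power2_eq_square algebra_simps)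
  have "2 powr \<beta> \<le> real n" using n by linarith
  then have "2 * 2 powr \<beta> \<le> 2 * real n + 1 + 1" by simp
  also have "\<dots> \<le> exp (2 * real n + 1)" using exp_ge_add_one_self[of "2 * real n + 1"] by simp
  finally have "2 * 2 powr \<beta> * exp (-(2 * real n + 1)) \<le> exp (2 * real n + 1) * exp (-(2 * real n + 1))"
    by (intro mult_right_mono) auto
  also have "\<dots> = 1" by (simp add: exp_add[symmetric])
  finally have "2 powr \<beta> * exp (-(2 * real n + 1)) \<le> 1/2" by simp
  have "norm ((real (Suc n) + 1) powr \<beta> * exp (- ((real (Suc n))^2)))
      = (real (Suc n) + 1) powr \<beta> * exp (- ((real (Suc n))^2))" by simp
  also have "\<dots> \<le> 2 powr \<beta> * (real n + 1) powr \<beta> * (exp (- ((real n)^2)) * exp (-(2 * real n + 1)))"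
    using p p2 e by (simp add: mult_right_mono)
  also have "\<dots> = (2 powr \<beta> * exp (-(2 * real n + 1))) * ((real n + 1) powr \<beta> * exp (- ((real n)^2)))"
    by simp
  also have "\<dots> \<le> 1/2 * ((real n + 1) powr \<beta> * exp (- ((real n)^2)))"
    using \<open>2 powr \<beta> * exp (-(2 * real n + 1)) \<le> 1/2\<close> by (intro mult_right_mono) auto
  finally show "norm ((real (Suc n) + 1) powr \<beta> * exp (- ((real (Suc n))^2)))
      \<le> 1/2 * norm ((real n + 1) powr \<beta> * exp (- ((real n)^2)))" by simp
qed simp

lemma ip_meas[measurable]: "(\<lambda>c. ip d c e) \<in> borel_measurable borel"
  unfolding ip_def by measurable

lemma ip_meas2[measurable]: "(\<lambda>c. ip d c e + \<delta>) \<in> borel_measurable borel"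
  by measurable

lemma Tset_meas[measurable]: assumes fin: "finite E" shows "Measurable.pred borel (Tset d E \<delta>)"
proof -
  have le: "Measurable.pred borel (\<lambda>c. ip d c e \<le> ip d c e' + \<delta>)" for e e'
    unfolding pred_def by (rule borel_measurable_le) (rule ip_meas, rule ip_meas2)
  have lt: "Measurable.pred borel (\<lambda>c. ip d c e' < ip d c e)" for e e' by measurable
  show ?thesis unfolding Tset_def
    by (intro pred_intros_finite(3,4) pred_intros_logic(3) fin le lt)
qed

lemma nrm_meas[measurable]:
  assumes "f \<in> M \<rightarrow>\<^sub>M borel" "g \<in> M \<rightarrow>\<^sub>M (borel :: (nat \<Rightarrow> real) measure)"
  shows "(\<lambda>x. nrm d (f x - g x)) \<in> borel_measurable M"
proof -
  have "(\<lambda>x. f x i) \<in> borel_measurable M" "(\<lambda>x. g x i) \<in> borel_measurable M" for i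
    using measurable_compose[OF assms(1) measurable_product_coordinates]
      measurable_compose[OF assms(2) measurable_product_coordinates] by auto
  then show ?thesis unfolding nrm_def by simp
qed


lemma integral_le_nn:
  fixes f :: "'a \<Rightarrow> real"
  assumes "\<And>x. 0 \<le> f x"
  shows "ennreal (integral\<^sup>L M f) \<le> (\<integral>\<^sup>+x. ennreal (f x) \<partial>M)"
proof (cases "integrable M f")
  case True then show ?thesis using nn_integral_eq_integral[OF True] assms by simp
next
  case False then show ?thesis by (simp add: not_integrable_integral_eq)
qed

theorem theorem8:
  fixes \<alpha> \<gamma> C1 C2 :: real
  assumes "\<alpha> \<ge> 0" and "\<gamma> \<ge> 0" and "C1 > 0" and "C2 > 0"
  shows "\<exists>C::real. \<forall>(p::nat) (d::nat) (n::nat) (a::real) (B::real) (m::nat)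
      (A::nat \<Rightarrow> nat \<Rightarrow> real) (b::nat \<Rightarrow> real) (zs::(nat \<Rightarrow> real) list)
      (M::((nat \<Rightarrow> real) \<times> (nat \<Rightarrow> real)) measure)
      (fstar::(nat \<Rightarrow> real) \<Rightarrow> (nat \<Rightarrow> real))
      (fhat::(nat \<Rightarrow> (nat \<Rightarrow> real) \<times> (nat \<Rightarrow> real)) \<Rightarrow> (nat \<Rightarrow> real) \<Rightarrow> (nat \<Rightarrow> real))
      (pistar::(nat \<Rightarrow> real) \<Rightarrow> (nat \<Rightarrow> real)).
    (let Z = polytope d m A b; PX = distr M borel fst; PD = PiM {..<n} (\<lambda>_. M) in
     a > 0 \<and> B > 0 \<and>
     prob_space M \<and> sets M = sets (borel \<Otimes>\<^sub>M borel) \<and>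
     (AE xy in M. fst xy \<in> vspace p \<and> snd xy \<in> vspace d \<and> nrm d (snd xy) \<le> 1) \<and>
     is_cond_exp_Y d M fstar \<and>
     Z \<noteq> {} \<and> (\<forall>z\<in>Z. nrm d z \<le> B) \<and>
     distinct zs \<and> set zs = extreme_pts Z \<and>
     (\<forall>x. pistar x \<in> opt_set d Z (fstar x)) \<and>
     (\<forall>\<delta>>0. measure PX {x \<in> space PX. 0 < gap d Z (fstar x) \<and> gap d Z (fstar x) \<le> \<delta>}
              \<le> noise_rhs \<alpha> \<gamma> B \<delta>) \<and>
     (\<forall>D x. fhat D x \<in> vspace d) \<and>
     (\<lambda>Dx. fhat (fst Dx) (snd Dx)) \<in> (PD \<Otimes>\<^sub>M PX) \<rightarrow>\<^sub>M borel \<and>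
     (\<forall>\<delta>>0. AE x in PX.
        measure PD {D \<in> space PD. nrm d (fhat D x - fstar x) \<ge> \<delta>} \<le> C1 * exp (- C2 * a * \<delta>^2))
     \<longrightarrow>
     (\<integral>D. (\<integral>x. ip d (fstar x) (plugin d Z zs (fhat D x) - pistar x) \<partial>PX) \<partial>PD)
       \<le> C * B * a powr (- (1 + \<alpha>) / 2))"

proof -
  define C1' where "C1' = max 1 C1"
  define K where "K = (if \<alpha> = 0 then 1 else (2*\<gamma>) powr \<alpha>)"
  define S where "S = (\<Sum>k. (real k + 1) powr (1+\<alpha>) * exp (- ((real k)^2)))"
  define C where "C = 2 * C1' * K * S * C2 powr (-(1+\<alpha>)/2)"
  have summS: "summable (\<lambda>k. (real k + 1) powr (1+\<alpha>) * exp (- ((real k)^2)))"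
    using summ_s[of "1+\<alpha>"] assms by simp
  have S0: "S \<ge> 0" unfolding S_def using summS by (intro suminf_nonneg) auto
  have K0: "K \<ge> 0" unfolding K_def by auto
  have C1'1: "C1' \<ge> 1" "C1' \<ge> C1" unfolding C1'_def by auto
  show ?thesis
  proof (rule exI[of _ C], intro allI)
    fix p d n :: nat and a B :: real and m :: nat and A :: "nat \<Rightarrow> nat \<Rightarrow> real"
      and b :: "nat \<Rightarrow> real" and zs :: "(nat \<Rightarrow> real) list"
      and M :: "((nat \<Rightarrow> real) \<times> (nat \<Rightarrow> real)) measure"
      and fstar :: "(nat \<Rightarrow> real) \<Rightarrow> (nat \<Rightarrow> real)"
      and fhat :: "(nat \<Rightarrow> (nat \<Rightarrow> real) \<times> (nat \<Rightarrow> real)) \<Rightarrow> (nat \<Rightarrow> real) \<Rightarrow> (nat \<Rightarrow> real)"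
      and pistar :: "(nat \<Rightarrow> real) \<Rightarrow> (nat \<Rightarrow> real)"
    define Z where "Z = polytope d m A b"
    define PX where "PX = distr M borel fst"
    define PD where "PD = PiM {..<n} (\<lambda>_. M)"
    show "let Z = polytope d m A b; PX = distr M borel fst; PD = PiM {..<n} (\<lambda>_. M) in
     a > 0 \<and> B > 0 \<and>
     prob_space M \<and> sets M = sets (borel \<Otimes>\<^sub>M borel) \<and>
     (AE xy in M. fst xy \<in> vspace p \<and> snd xy \<in> vspace d \<and> nrm d (snd xy) \<le> 1) \<and>
     is_cond_exp_Y d M fstar \<and>
     Z \<noteq> {} \<and> (\<forall>z\<in>Z. nrm d z \<le> B) \<and>
     distinct zs \<and> set zs = extreme_pts Z \<and>
     (\<forall>x. pistar x \<in> opt_set d Z (fstar x)) \<and>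
     (\<forall>\<delta>>0. measure PX {x \<in> space PX. 0 < gap d Z (fstar x) \<and> gap d Z (fstar x) \<le> \<delta>}
              \<le> noise_rhs \<alpha> \<gamma> B \<delta>) \<and>
     (\<forall>D x. fhat D x \<in> vspace d) \<and>
     (\<lambda>Dx. fhat (fst Dx) (snd Dx)) \<in> (PD \<Otimes>\<^sub>M PX) \<rightarrow>\<^sub>M borel \<and>
     (\<forall>\<delta>>0. AE x in PX.
        measure PD {D \<in> space PD. nrm d (fhat D x - fstar x) \<ge> \<delta>} \<le> C1 * exp (- C2 * a * \<delta>^2))
     \<longrightarrow>
     (\<integral>D. (\<integral>x. ip d (fstar x) (plugin d Z zs (fhat D x) - pistar x) \<partial>PX) \<partial>PD)
       \<le> C * B * a powr (- (1 + \<alpha>) / 2)"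
      unfolding Let_def Z_def[symmetric] PX_def[symmetric] PD_def[symmetric]
    proof (intro impI)
      assume H: "a > 0 \<and> B > 0 \<and>
     prob_space M \<and> sets M = sets (borel \<Otimes>\<^sub>M borel) \<and>
     (AE xy in M. fst xy \<in> vspace p \<and> snd xy \<in> vspace d \<and> nrm d (snd xy) \<le> 1) \<and>
     is_cond_exp_Y d M fstar \<and>
     Z \<noteq> {} \<and> (\<forall>z\<in>Z. nrm d z \<le> B) \<and>
     distinct zs \<and> set zs = extreme_pts Z \<and>
     (\<forall>x. pistar x \<in> opt_set d Z (fstar x)) \<and>
     (\<forall>\<delta>>0. measure PX {x \<in> space PX. 0 < gap d Z (fstar x) \<and> gap d Z (fstar x) \<le> \<delta>}
              \<le> noise_rhs \<alpha> \<gamma> B \<delta>) \<and>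
     (\<forall>D x. fhat D x \<in> vspace d) \<and>
     (\<lambda>Dx. fhat (fst Dx) (snd Dx)) \<in> (PD \<Otimes>\<^sub>M PX) \<rightarrow>\<^sub>M borel \<and>
     (\<forall>\<delta>>0. AE x in PX.
        measure PD {D \<in> space PD. nrm d (fhat D x - fstar x) \<ge> \<delta>} \<le> C1 * exp (- C2 * a * \<delta>^2))"
      then have a0: "a > 0" and B0: "B > 0" and PM: "prob_space M"
        and sM: "sets M = sets (borel \<Otimes>\<^sub>M borel)" and fs: "is_cond_exp_Y d M fstar"
        and Zne: "Z \<noteq> {}" and bnd: "\<forall>z\<in>Z. nrm d z \<le> B" and zsE: "set zs = extreme_pts Z"
        and pis: "\<forall>x. pistar x \<in> opt_set d Z (fstar x)"
        and noise: "\<forall>\<delta>>0. measure PX {x \<in> space PX. 0 < gap d Z (fstar x) \<and> gap d Z (fstar x) \<le> \<delta>}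
              \<le> noise_rhs \<alpha> \<gamma> B \<delta>"
        and fhm: "(\<lambda>Dx. fhat (fst Dx) (snd Dx)) \<in> (PD \<Otimes>\<^sub>M PX) \<rightarrow>\<^sub>M borel"
        and tail: "\<forall>\<delta>>0. AE x in PX.
        measure PD {D \<in> space PD. nrm d (fhat D x - fstar x) \<ge> \<delta>} \<le> C1 * exp (- C2 * a * \<delta>^2)"
        by blast+
      interpret polysetup d m A b B zs
        using bnd Zne zsE unfolding Z_def by unfold_locales auto
      have fsm: "fstar \<in> borel \<rightarrow>\<^sub>M borel" using fs unfolding is_cond_exp_Y_def by blast
      have fstm: "fst \<in> M \<rightarrow>\<^sub>M borel"
        using measurable_fst measurable_cong_sets[OF sM[symmetric] refl] by blast
      interpret PXp: prob_space PX unfolding PX_def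
        using prob_space.prob_space_distr[OF PM fstm] .
      interpret PDp: prob_space PD unfolding PD_def
        using PM by (intro prob_space_PiM) auto
      interpret PP: pair_prob_space PD PX ..
      have sPX: "sets PX = sets borel" unfolding PX_def by simp
      have spPX: "space PX = UNIV" unfolding PX_def by simp
      have fsX: "fstar \<in> PX \<rightarrow>\<^sub>M borel" using fsm measurable_cong_sets[OF sPX refl] by blast

      define c where "c = C2 * a"
      have c0: "c > 0" unfolding c_def using a0 assms by simp
      define u where "u = 1 / sqrt c"
      have u0: "u > 0" unfolding u_def using c0 by simp
      have cu: "c * u^2 = 1" unfolding u_def using c0 by (simp add: power_divide)
      define \<delta> where "\<delta> k = 2 * B * (real k + 1) * u" for k :: nat
      have \<delta>0: "\<delta> k > 0" for k unfolding \<delta>_def using B0 u0 by simp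
      define h where "h D x = ip d (fstar x) (plugin d Z zs (fhat D x) - pistar x)" for D x
      define e where "e D x = nrm d (fhat D x - fstar x)" for D x
      define P where "P k Dx = (Tset d E (\<delta> k) (fstar (snd Dx)) \<and> real k * u \<le> e (fst Dx) (snd Dx))"
        for k Dx
      define G where "G Dx = (\<Sum>k. if P k Dx then ennreal (\<delta> k) else 0)" for Dx
      have h0: "0 \<le> h D x" for D x
        unfolding h_def Z_def using regret_pt(1)[OF pis[rule_format, of x, unfolded Z_def]] .
      have e0: "0 \<le> e D x" for D x unfolding e_def nrm_def by (simp add: sum_nonneg)
      have hG: "ennreal (h D x) \<le> G (D, x)" for D x
      proof (cases "h D x > 0")
        case False
        then have "h D x = 0" using h0[of D x] by linarith
        then show ?thesis by simp
      next
        case True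
        have pi': "pistar x \<in> opt_set d (polytope d m A b) (fstar x)" using pis Z_def by simp
        have hle: "h D x \<le> 2 * B * e D x"
          unfolding h_def e_def Z_def using regret_pt(2)[OF pi'] .
        have hT: "Tset d E (h D x) (fstar x)"
          using regret_pt(3)[OF pi'] True unfolding h_def Z_def by blast
        define k where "k = nat \<lfloor>e D x / u\<rfloor>"
        have k1: "real k * u \<le> e D x"
        proof -
          have "real k = \<lfloor>e D x / u\<rfloor>" unfolding k_def using e0 u0 by simp
          then have "real k \<le> e D x / u" by linarith
          then show ?thesis using u0 by (simp add: pos_le_divide_eq)
        qed
        have k2: "e D x < (real k + 1) * u"
        proof -
          have "real k = \<lfloor>e D x / u\<rfloor>" unfolding k_def using e0 u0 by simp
          then have "e D x / u < real k + 1" by linarith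
          then show ?thesis using u0 by (simp add: divide_less_eq)
        qed
        have "h D x \<le> \<delta> k" unfolding \<delta>_def using hle k2 B0
          by (smt (verit, best) mult_less_cancel_left_pos mult.assoc)
        then have Pk: "P k (D, x)" unfolding P_def using T_mono[OF hT] k1 by auto
        have "ennreal (h D x) \<le> ennreal (\<delta> k)" using \<open>h D x \<le> \<delta> k\<close> by (rule ennreal_leI)
        also have "\<dots> = (\<Sum>j\<in>{k}. if P j (D, x) then ennreal (\<delta> j) else 0)" using Pk by simp
        also have "\<dots> \<le> G (D, x)" unfolding G_def by (rule sum_le_suminf) auto
        finally show ?thesis .
      qed

      have finE: "finite E" by simp
      have fsnd: "(\<lambda>Dx. fstar (snd Dx)) \<in> (PD \<Otimes>\<^sub>M PX) \<rightarrow>\<^sub>M borel"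
        using measurable_compose[OF measurable_snd fsX, of PD] by (simp add: comp_def)
      have emeas: "(\<lambda>Dx. e (fst Dx) (snd Dx)) \<in> borel_measurable (PD \<Otimes>\<^sub>M PX)"
        unfolding e_def by (rule nrm_meas[OF fhm fsnd])
      have Tm: "Measurable.pred (PD \<Otimes>\<^sub>M PX) (\<lambda>Dx. Tset d E (\<delta> k) (fstar (snd Dx)))" for k
        using measurable_compose[OF fsnd Tset_meas[OF finE]] by (simp add: comp_def)
      have Em: "Measurable.pred (PD \<Otimes>\<^sub>M PX) (\<lambda>Dx. real k * u \<le> e (fst Dx) (snd Dx))" for k
        using emeas by measurable
      have Pm: "Measurable.pred (PD \<Otimes>\<^sub>M PX) (P k)" for k
        unfolding P_def by (intro pred_intros_logic(3) Tm Em)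
      have Gtm: "(\<lambda>Dx. if P k Dx then ennreal (\<delta> k) else 0) \<in> borel_measurable (PD \<Otimes>\<^sub>M PX)" for k
        by (rule measurable_If) (use Pm[of k] in \<open>auto simp: pred_def\<close>)
      have Gm: "G \<in> borel_measurable (PD \<Otimes>\<^sub>M PX)"
        unfolding G_def by (rule borel_measurable_suminf_order) (rule Gtm)
      define w where "w k = \<delta> k * (C1' * exp (- ((real k)^2)))" for k
      have w0: "0 \<le> w k" for k unfolding w_def using \<delta>0[of k] C1'1 by simp
      define Hx where "Hx x = (\<Sum>k. if Tset d E (\<delta> k) (fstar x) then ennreal (w k) else 0)" for x
      have AEt: "AE x in PX. \<forall>k. measure PD {D \<in> space PD. real k * u \<le> e D x} \<le> C1' * exp (- ((real k)^2))"
      proof (subst AE_all_countable, intro allI)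
        fix k :: nat
        show "AE x in PX. measure PD {D \<in> space PD. real k * u \<le> e D x} \<le> C1' * exp (- ((real k)^2))"
        proof (cases "k = 0")
          case True
          show ?thesis using True C1'1 by (intro AE_I2) (simp add: PDp.prob_le_1 order_trans[OF PDp.prob_le_1])
        next
          case False
          then have kp: "real k * u > 0" using u0 by simp
          have eq: "C2 * a * (real k * u)^2 = (real k)^2" using cu unfolding c_def
            by (simp add: power_mult_distrib algebra_simps)
          show ?thesis using tail[rule_format, OF kp]
          proof (rule AE_mp, intro AE_I2 impI)
            fix x assume "measure PD {D \<in> space PD. real k * u \<le> nrm d (fhat D x - fstar x)}
                  \<le> C1 * exp (- C2 * a * (real k * u)^2)"
            then have "measure PD {D \<in> space PD. real k * u \<le> e D x} \<le> C1 * exp (- ((real k)^2))"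
              unfolding e_def using eq by simp
            also have "\<dots> \<le> C1' * exp (- ((real k)^2))" using C1'1 by (intro mult_right_mono) auto
            finally show "measure PD {D \<in> space PD. real k * u \<le> e D x} \<le> C1' * exp (- ((real k)^2))" .
          qed
        qed
      qed
      have inner: "(\<integral>\<^sup>+D. G (D, x) \<partial>PD) \<le> Hx x"
        if xP: "\<forall>k. measure PD {D \<in> space PD. real k * u \<le> e D x} \<le> C1' * exp (- ((real k)^2))" for x
      proof -
        have xs: "x \<in> space PX" using spPX by simp
        have pm: "(\<lambda>D. (D, x)) \<in> PD \<rightarrow>\<^sub>M (PD \<Otimes>\<^sub>M PX)" by (rule measurable_Pair2'[OF xs])
        have tm: "(\<lambda>D. if P k (D, x) then ennreal (\<delta> k) else 0) \<in> borel_measurable PD" for k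
          using measurable_compose[OF pm Gtm[of k]] by (simp add: comp_def)
        have em: "(\<lambda>D. e D x) \<in> borel_measurable PD"
          using measurable_compose[OF pm emeas] by (simp add: comp_def)
        have setm: "{D \<in> space PD. real k * u \<le> e D x} \<in> sets PD" for k
          using em by measurable
        have "(\<integral>\<^sup>+D. G (D, x) \<partial>PD) = (\<Sum>k. \<integral>\<^sup>+D. (if P k (D, x) then ennreal (\<delta> k) else 0) \<partial>PD)"
          unfolding G_def by (rule nn_integral_suminf) (rule tm)
        also have "\<dots> \<le> (\<Sum>k. if Tset d E (\<delta> k) (fstar x) then ennreal (w k) else 0)"
        proof (rule suminf_le)
          fix k
          show "(\<integral>\<^sup>+D. (if P k (D, x) then ennreal (\<delta> k) else 0) \<partial>PD)
              \<le> (if Tset d E (\<delta> k) (fstar x) then ennreal (w k) else 0)"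
          proof (cases "Tset d E (\<delta> k) (fstar x)")
            case True
            have "(\<integral>\<^sup>+D. (if P k (D, x) then ennreal (\<delta> k) else 0) \<partial>PD)
                = (\<integral>\<^sup>+D. ennreal (\<delta> k) * indicator {D \<in> space PD. real k * u \<le> e D x} D \<partial>PD)"
              by (rule nn_integral_cong) (auto simp: P_def True indicator_def)
            also have "\<dots> = ennreal (\<delta> k) * emeasure PD {D \<in> space PD. real k * u \<le> e D x}"
              by (rule nn_integral_cmult_indicator[OF setm])
            also have "\<dots> = ennreal (\<delta> k) * ennreal (measure PD {D \<in> space PD. real k * u \<le> e D x})"
              by (simp add: PDp.emeasure_eq_measure)
            also have "\<dots> \<le> ennreal (\<delta> k) * ennreal (C1' * exp (- ((real k)^2)))"
              using xP by (intro mult_left_mono ennreal_leI) auto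
            also have "\<dots> = ennreal (w k)" unfolding w_def using \<delta>0[of k]
              by (simp add: ennreal_mult'[symmetric])
            finally show ?thesis using True by simp
          next
            case False
            then show ?thesis by (simp add: P_def)
          qed
        qed auto
        finally show ?thesis unfolding Hx_def .
      qed
      have Tx: "{x \<in> space PX. Tset d E (\<delta> k) (fstar x)} \<in> sets PX" for k
        using measurable_compose[OF fsX Tset_meas[OF finE]] by (simp add: comp_def pred_def)
      have noise_k: "noise_rhs \<alpha> \<gamma> B (\<delta> k) = K * ((real k + 1) powr \<alpha> * u powr \<alpha>)" for k
      proof (cases "\<alpha> = 0")
        case True then show ?thesis unfolding noise_rhs_def K_def using u0 by simp
      next
        case False
        have "\<gamma> * \<delta> k / B = (2 * \<gamma>) * ((real k + 1) * u)" unfolding \<delta>_def using B0 by simp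
        then have "noise_rhs \<alpha> \<gamma> B (\<delta> k) = ((2 * \<gamma>) * ((real k + 1) * u)) powr \<alpha>"
          unfolding noise_rhs_def using False by simp
        also have "\<dots> = (2 * \<gamma>) powr \<alpha> * (((real k + 1) * u) powr \<alpha>)"
          using assms u0 powr_mult[of "2 * \<gamma>" "(real k + 1) * u" \<alpha>] by simp
        also have "\<dots> = (2 * \<gamma>) powr \<alpha> * ((real k + 1) powr \<alpha> * u powr \<alpha>)"
          using u0 powr_mult[of "real k + 1" u \<alpha>] by simp
        finally show ?thesis unfolding K_def using False by simp
      qed
      define Q where "Q = 2 * B * C1' * K * u powr (1 + \<alpha>)"
      have Q0: "Q \<ge> 0" unfolding Q_def using B0 C1'1 K0 by simp
      have wk: "w k * noise_rhs \<alpha> \<gamma> B (\<delta> k) = Q * ((real k + 1) powr (1+\<alpha>) * exp (- ((real k)^2)))" for k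
      proof -
        have a1: "(real k + 1) powr (1+\<alpha>) = (real k + 1) * (real k + 1) powr \<alpha>"
          by (simp add: powr_add)
        have a2: "u powr (1+\<alpha>) = u * u powr \<alpha>" using u0 by (simp add: powr_add)
        show ?thesis unfolding w_def noise_k unfolding Q_def \<delta>_def a1 a2 by (simp add: algebra_simps)
      qed
      have outer: "(\<integral>\<^sup>+x. Hx x \<partial>PX) \<le> ennreal (Q * S)"
      proof -
        have hm: "(\<lambda>x. if Tset d E (\<delta> k) (fstar x) then ennreal (w k) else 0) \<in> borel_measurable PX" for k
          by (rule measurable_If) (use Tx[of k] in auto)
        have "(\<integral>\<^sup>+x. Hx x \<partial>PX) = (\<Sum>k. \<integral>\<^sup>+x. (if Tset d E (\<delta> k) (fstar x) then ennreal (w k) else 0) \<partial>PX)"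
          unfolding Hx_def by (rule nn_integral_suminf) (rule hm)
        also have "\<dots> \<le> (\<Sum>k. ennreal (Q * ((real k + 1) powr (1+\<alpha>) * exp (- ((real k)^2)))))"
        proof (rule suminf_le)
          fix k
          have "(\<integral>\<^sup>+x. (if Tset d E (\<delta> k) (fstar x) then ennreal (w k) else 0) \<partial>PX)
              = (\<integral>\<^sup>+x. ennreal (w k) * indicator {x \<in> space PX. Tset d E (\<delta> k) (fstar x)} x \<partial>PX)"
            by (rule nn_integral_cong) (auto simp: indicator_def)
          also have "\<dots> = ennreal (w k) * emeasure PX {x \<in> space PX. Tset d E (\<delta> k) (fstar x)}"
            by (rule nn_integral_cmult_indicator[OF Tx])
          also have "{x \<in> space PX. Tset d E (\<delta> k) (fstar x)}
              = {x \<in> space PX. 0 < gap d Z (fstar x) \<and> gap d Z (fstar x) \<le> \<delta> k}"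
            unfolding Z_def using gap_T by blast
          also have "ennreal (w k) * emeasure PX {x \<in> space PX. 0 < gap d Z (fstar x) \<and> gap d Z (fstar x) \<le> \<delta> k}
              = ennreal (w k) * ennreal (measure PX {x \<in> space PX. 0 < gap d Z (fstar x) \<and> gap d Z (fstar x) \<le> \<delta> k})"
            by (simp add: PXp.emeasure_eq_measure)
          also have "\<dots> \<le> ennreal (w k) * ennreal (noise_rhs \<alpha> \<gamma> B (\<delta> k))"
            using noise[rule_format, OF \<delta>0[of k]] by (intro mult_left_mono ennreal_leI) auto
          also have "\<dots> = ennreal (w k * noise_rhs \<alpha> \<gamma> B (\<delta> k))"
            using w0[of k] by (simp add: ennreal_mult')
          finally show "(\<integral>\<^sup>+x. (if Tset d E (\<delta> k) (fstar x) then ennreal (w k) else 0) \<partial>PX)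
              \<le> ennreal (Q * ((real k + 1) powr (1+\<alpha>) * exp (- ((real k)^2))))" unfolding wk .
        qed auto
        also have "\<dots> = ennreal (\<Sum>k. Q * ((real k + 1) powr (1+\<alpha>) * exp (- ((real k)^2))))"
          using Q0 summS by (intro suminf_ennreal2 summable_mult) auto
        also have "(\<Sum>k. Q * ((real k + 1) powr (1+\<alpha>) * exp (- ((real k)^2)))) = Q * S"
          unfolding S_def using summS by (simp add: suminf_mult)
        finally show ?thesis .
      qed
      have QS: "Q * S = C * B * a powr (- (1 + \<alpha>) / 2)"
      proof -
        have "u = c powr (- (1/2))" unfolding u_def using c0 by (simp add: powr_minus_divide powr_half_sqrt)
        then have "u powr (1 + \<alpha>) = c powr (- (1/2) * (1 + \<alpha>))" by (simp add: powr_powr)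
        also have "- (1/2) * (1 + \<alpha>) = - (1 + \<alpha>) / 2" by (simp add: field_simps)
        finally have "u powr (1 + \<alpha>) = c powr (- (1 + \<alpha>) / 2)" .
        also have "\<dots> = C2 powr (- (1 + \<alpha>) / 2) * a powr (- (1 + \<alpha>) / 2)"
          unfolding c_def using assms a0 powr_mult[of C2 a "- (1 + \<alpha>) / 2"] by simp
        finally show ?thesis unfolding Q_def C_def by (simp add: algebra_simps)
      qed
      have Fn: "0 \<le> (\<integral>x. h D x \<partial>PX)" for D
        using Bochner_Integration.integral_nonneg[of PX "h D"] h0 by simp
      have "ennreal (\<integral>D. (\<integral>x. h D x \<partial>PX) \<partial>PD) \<le> (\<integral>\<^sup>+D. ennreal (\<integral>x. h D x \<partial>PX) \<partial>PD)"
        by (rule integral_le_nn) (rule Fn)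
      also have "\<dots> \<le> (\<integral>\<^sup>+D. (\<integral>\<^sup>+x. ennreal (h D x) \<partial>PX) \<partial>PD)"
        by (intro nn_integral_mono integral_le_nn h0)
      also have "\<dots> \<le> (\<integral>\<^sup>+D. (\<integral>\<^sup>+x. G (D, x) \<partial>PX) \<partial>PD)"
        by (intro nn_integral_mono hG)
      also have "\<dots> = (\<integral>\<^sup>+x. (\<integral>\<^sup>+D. G (D, x) \<partial>PD) \<partial>PX)"
        by (rule PP.Fubini[OF Gm, symmetric])
      also have "\<dots> \<le> (\<integral>\<^sup>+x. Hx x \<partial>PX)"
        by (rule nn_integral_mono_AE) (use AEt inner in \<open>auto elim: AE_mp\<close>)
      also have "\<dots> \<le> ennreal (C * B * a powr (- (1 + \<alpha>) / 2))" using outer QS by simp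
      finally have chain: "ennreal (\<integral>D. (\<integral>x. h D x \<partial>PX) \<partial>PD) \<le> ennreal (C * B * a powr (- (1 + \<alpha>) / 2))" .
      have "0 \<le> C * B * a powr (- (1 + \<alpha>) / 2)" using QS[symmetric] Q0 S0 by simp
      then have fin: "(\<integral>D. (\<integral>x. h D x \<partial>PX) \<partial>PD) \<le> C * B * a powr (- (1 + \<alpha>) / 2)"
        using chain by (subst (asm) ennreal_le_iff) auto
      then show "(\<integral>D. (\<integral>x. ip d (fstar x) (plugin d Z zs (fhat D x) - pistar x) \<partial>PX) \<partial>PD)
          \<le> C * B * a powr (- (1 + \<alpha>) / 2)" unfolding h_def .
    qed
  qed
qed

end
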